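(* Let $\Theta$ be a non-empty finite set, let $\mathcal{S}$ be a measurable subset of $\Delta(\Theta)$, and fix an interview cost $c>0$. Let $\pi,\pi'\in\Delta(\mathcal{S})$ be two populations with the same skill distribution, i.e. $p_\pi=p_{\pi'}$. Then: (a) There is systematic ex-ante discrimination against $\pi$ if and only if $\pi' \mathrel{M} \pi$ and $\pi\neq\pi'$. (b) There is unsystematic ex-ante discrimination if and only if neither $\pi \mathrel{M} \pi'$ nor $\pi' \mathrel{M} \pi$ holds. (c) There is no ex-ante discrimination if and only if $\pi=\pi'$.
   Context: $\Delta(\Theta)$ denotes the set of probability distributions on $\Theta$ (with its Borel $\sigma$-algebra). A population is a probability measure $\pi\in\Delta(\mathcal{S})$; its skill distribution is $p_\pi(\theta)=\int_{\mathcal{S}} s(\theta)\,\pi(\mathrm{d}s)$ for $\theta\in\Theta$. For a non-empty finite $A\subset\mathbb{R}^\Theta$, $v_A(s)=\max_{a\in A}\sum_{\theta\in\Theta}a(\theta)s(\theta)$. A firm is a pair $(A,\alpha)$ with $A$ a non-empty finite subset of $\mathbb{R}^\Theta$ and $0<\alpha\le 1$. Firm $(A,\alpha)$ excludes population $\pi$ if $\alpha\int_{\mathcal{S}}\max\{v_A,0\}\,\mathrm{d}\pi\le c$ (and interviews $\pi$ otherwise). For $\pi,\pi'$ with $p_\pi=p_{\pi'}$: there is systematic ex-ante discrimination against $\pi$ if every firm that excludes $\pi'$ also excludes $\pi$, and some firm excludes $\pi$ but not $\pi'$. There is unsystematic ex-ante discrimination if there is a firm that excludes $\pi$ but not $\pi'$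 and a firm that excludes $\pi'$ but not $\pi$. There is no ex-ante discrimination if there is neither systematic ex-ante discrimination (against $\pi$ or against $\pi'$) nor unsystematic ex-ante discrimination. $\pi' \mathrel{M} \pi$ means $\int_{\mathcal{S}} h\,\mathrm{d}\pi'\ge\int_{\mathcal{S}} h\,\mathrm{d}\pi$ for every convex continuous $h:\Delta(\Theta)\to\mathbb{R}$. *)

theory Defs
  imports "HOL-Probability.Probability"
begin

definition Delta_set :: "(real^'a::finite) set" where
  "Delta_set = {p. (\<forall>\<theta>. 0 \<le> p $ \<theta>) \<and> (\<Sum>\<theta>\<in>UNIV. p $ \<theta>) = 1}"

definition population :: "(real^'a::finite) set \<Rightarrow> (real^'a) measure \<Rightarrow> bool" where
  "population S \<pi> \<longleftrightarrow> prob_space \<pi> \<and> sets \<pi> = sets (restrict_space borel S)"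

definition skill :: "(real^'a::finite) measure \<Rightarrow> 'a \<Rightarrow> real" where
  "skill \<pi> \<theta> = (\<integral>s. s $ \<theta> \<partial>\<pi>)"

definition vA :: "(real^'a::finite) set \<Rightarrow> (real^'a) \<Rightarrow> real" where
  "vA A s = Max ((\<lambda>a. \<Sum>\<theta>\<in>UNIV. a $ \<theta> * s $ \<theta>) ` A)"

definition firm :: "(real^'a::finite) set \<Rightarrow> real \<Rightarrow> bool" where
  "firm A \<alpha> \<longleftrightarrow> finite A \<and> A \<noteq> {} \<and> 0 < \<alpha> \<and> \<alpha> \<le> 1"

definition excludes :: "real \<Rightarrow> (real^'a::finite) set \<Rightarrow> real \<Rightarrow> (real^'a) measure \<Rightarrow> bool" where
  "excludes c A \<alpha> \<pi> \<longleftrightarrow> \<alpha> * (\<integral>s. max (vA A s) 0 \<partial>\<pi>) \<le> c"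

definition sys_disc :: "real \<Rightarrow> (real^'a::finite) measure \<Rightarrow> (real^'a) measure \<Rightarrow> bool" where
  "sys_disc c \<pi> \<pi>' \<longleftrightarrow>
     (\<forall>A \<alpha>. firm A \<alpha> \<longrightarrow> excludes c A \<alpha> \<pi>' \<longrightarrow> excludes c A \<alpha> \<pi>) \<and>
     (\<exists>A \<alpha>. firm A \<alpha> \<and> excludes c A \<alpha> \<pi> \<and> \<not> excludes c A \<alpha> \<pi>')"

definition unsys_disc :: "real \<Rightarrow> (real^'a::finite) measure \<Rightarrow> (real^'a) measure \<Rightarrow> bool" where
  "unsys_disc c \<pi> \<pi>' \<longleftrightarrow>
     (\<exists>A \<alpha>. firm A \<alpha> \<and> excludes c A \<alpha> \<pi> \<and> \<not> excludes c A \<alpha> \<pi>') \<and>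
     (\<exists>A \<alpha>. firm A \<alpha> \<and> excludes c A \<alpha> \<pi>' \<and> \<not> excludes c A \<alpha> \<pi>)"

definition no_disc :: "real \<Rightarrow> (real^'a::finite) measure \<Rightarrow> (real^'a) measure \<Rightarrow> bool" where
  "no_disc c \<pi> \<pi>' \<longleftrightarrow> \<not> sys_disc c \<pi> \<pi>' \<and> \<not> sys_disc c \<pi>' \<pi> \<and> \<not> unsys_disc c \<pi> \<pi>'"

text \<open>M_order \<pi>' \<pi> means \<pi>' M \<pi>: \<pi>' dominates \<pi> in the convex order.\<close>
definition M_order :: "(real^'a::finite) measure \<Rightarrow> (real^'a) measure \<Rightarrow> bool" where
  "M_order \<pi>' \<pi> \<longleftrightarrow>
     (\<forall>h :: (real^'a) \<Rightarrow> real. convex_on Delta_set h \<and> continuous_on Delta_set h \<longrightarrow>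
        (\<integral>s. h s \<partial>\<pi>') \<ge> (\<integral>s. h s \<partial>\<pi>))"

end

theory Submission
  imports Defs
begin


definition lin :: "real^'a::finite \<Rightarrow> real^'a \<Rightarrow> real" where
  "lin a s = (\<Sum>\<theta>\<in>UNIV. a $ \<theta> * s $ \<theta>)"

lemma lin_inner: "lin a s = inner a s"
  by (simp add: lin_def inner_vec_def)

lemma vA_lin: "vA A s = Max ((\<lambda>a. lin a s) ` A)"
  by (simp add: vA_def lin_def)

definition one :: "real^'a::finite" where "one = (\<chi> \<theta>. 1)"

lemma Delta_sum: "s \<in> Delta_set \<Longrightarrow> (\<Sum>\<theta>\<in>UNIV. s $ \<theta>) = 1"
  by (simp add: Delta_set_def)

lemma lin_shift: "s \<in> Delta_set \<Longrightarrow> lin (a + c *\<^sub>R one) s = lin a s + c"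
  by (simp add: lin_def one_def algebra_simps sum.distrib Delta_sum flip: sum_distrib_left)

lemma lin_scale: "lin (t *\<^sub>R a) s = t * lin a s"
  by (simp add: lin_def sum_distrib_left mult.assoc)

lemma lin_zero[simp]: "lin 0 s = 0"
  by (simp add: lin_def)

lemma Delta_closed: "closed (Delta_set :: (real^'a::finite) set)"
proof -
  have "Delta_set = {p::real^'a. \<forall>\<theta>. 0 \<le> p $ \<theta>} \<inter> {p. (\<Sum>\<theta>\<in>UNIV. p $ \<theta>) = 1}"
    by (auto simp: Delta_set_def)
  also have "closed \<dots>"
    by (intro closed_Int closed_Collect_all closed_Collect_le closed_Collect_eq continuous_intros)
  finally show ?thesis .
qed

lemma Delta_comp: "s \<in> Delta_set \<Longrightarrow> 0 \<le> s $ \<theta> \<and> s $ \<theta> \<le> 1"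
proof -
  assume s: "s \<in> Delta_set"
  hence nn: "\<forall>\<theta>. 0 \<le> s $ \<theta>" by (simp add: Delta_set_def)
  have "s $ \<theta> \<le> (\<Sum>\<theta>\<in>UNIV. s $ \<theta>)"
    using nn by (intro member_le_sum) auto
  thus ?thesis using s nn by (simp add: Delta_sum)
qed

lemma Delta_bounded: "bounded (Delta_set :: (real^'a::finite) set)"
proof -
  have "norm s \<le> 1" if "s \<in> Delta_set" for s :: "real^'a"
  proof -
    have "norm s \<le> (\<Sum>\<theta>\<in>UNIV. \<bar>s $ \<theta>\<bar>)" by (rule norm_le_l1_cart)
    also have "\<dots> = (\<Sum>\<theta>\<in>UNIV. s $ \<theta>)" using Delta_comp[OF that] by simp
    finally show ?thesis using that by (simp add: Delta_sum)
  qed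
  thus ?thesis by (auto simp: bounded_iff)
qed

lemma Delta_compact: "compact (Delta_set :: (real^'a::finite) set)"
  using Delta_closed Delta_bounded compact_eq_bounded_closed by blast

lemma Delta_convex: "convex (Delta_set :: (real^'a::finite) set)"
  unfolding convex_def
proof (intro ballI allI impI)
  fix x y :: "real^'a" and u v :: real
  assume x: "x \<in> Delta_set" and y: "y \<in> Delta_set" and uv: "0 \<le> u" "0 \<le> v" "u + v = 1"
  have "\<forall>\<theta>. 0 \<le> (u *\<^sub>R x + v *\<^sub>R y) $ \<theta>"
    using Delta_comp[OF x] Delta_comp[OF y] uv by simp
  moreover have "(\<Sum>\<theta>\<in>UNIV. (u *\<^sub>R x + v *\<^sub>R y) $ \<theta>) = 1"
    using Delta_sum[OF x] Delta_sum[OF y] uv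
    by (simp add: sum.distrib flip: sum_distrib_left)
  ultimately show "u *\<^sub>R x + v *\<^sub>R y \<in> Delta_set" by (simp add: Delta_set_def)
qed

lemma Delta_ne: "(\<chi> \<theta>. 1 / real CARD('a)) \<in> (Delta_set :: (real^'a::finite) set)"
  by (simp add: Delta_set_def)

lemma vA_insert: "finite A \<Longrightarrow> A \<noteq> {} \<Longrightarrow> vA (insert a A) s = max (lin a s) (vA A s)"
  by (simp add: vA_lin)

lemma vA_insert0: "finite A \<Longrightarrow> A \<noteq> {} \<Longrightarrow> max (vA A s) 0 = vA (insert 0 A) s"
  by (simp add: vA_insert max.commute)

lemma vA_cont: "finite A \<Longrightarrow> A \<noteq> {} \<Longrightarrow> continuous_on T (vA A)"
proof (induction A rule: finite_ne_induct)
  case (singleton x)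
  then show ?case by (simp add: vA_lin lin_def continuous_intros)
next
  case (insert x F)
  then show ?case by (simp add: vA_insert lin_def, intro continuous_on_max continuous_intros, simp)
qed

lemma vA_ge: "finite A \<Longrightarrow> a \<in> A \<Longrightarrow> lin a s \<le> vA A s"
  by (simp add: vA_lin)

lemma vA_attained: "finite A \<Longrightarrow> A \<noteq> {} \<Longrightarrow> \<exists>a\<in>A. vA A s = lin a s"
proof -
  assume "finite A" "A \<noteq> {}"
  hence "vA A s \<in> (\<lambda>a. lin a s) ` A" unfolding vA_lin by (intro Max_in) auto
  thus ?thesis by auto
qed

lemma vA_convex: "finite A \<Longrightarrow> A \<noteq> {} \<Longrightarrow> convex_on T (vA A) \<longleftrightarrow> convex T"
proof -
  assume f: "finite A" "A \<noteq> {}"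
  have "vA A (u *\<^sub>R x + v *\<^sub>R y) \<le> u * vA A x + v * vA A y" if "0 \<le> u" "0 \<le> v" for u v x y
  proof -
    obtain a where a: "a \<in> A" "vA A (u *\<^sub>R x + v *\<^sub>R y) = lin a (u *\<^sub>R x + v *\<^sub>R y)"
      using vA_attained[OF f] by blast
    have "lin a (u *\<^sub>R x + v *\<^sub>R y) = u * lin a x + v * lin a y"
      by (simp add: lin_inner inner_add_right)
    also have "\<dots> \<le> u * vA A x + v * vA A y"
      using vA_ge[OF f(1) a(1)] that by (intro add_mono mult_left_mono) auto
    finally show ?thesis using a by simp
  qed
  thus ?thesis by (auto simp: convex_on_def)
qed

lemma vA_scale: "finite A \<Longrightarrow> A \<noteq> {} \<Longrightarrow> 0 \<le> t \<Longrightarrow> vA ((\<lambda>a. t *\<^sub>R a) ` A) s = t * vA A s"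
proof -
  assume f: "finite A" "A \<noteq> {}" and t: "0 \<le> t"
  have "vA ((\<lambda>a. t *\<^sub>R a) ` A) s = Max ((\<lambda>x. t * x) ` ((\<lambda>a. lin a s) ` A))"
    by (simp add: vA_lin image_image lin_scale)
  also have "\<dots> = t * Max ((\<lambda>a. lin a s) ` A)"
    using f t by (intro mono_Max_commute[symmetric]) (auto simp: mono_def mult_left_mono)
  finally show ?thesis by (simp add: vA_lin)
qed

lemma vA_affine: "finite A \<Longrightarrow> A \<noteq> {} \<Longrightarrow> 0 \<le> t \<Longrightarrow> s \<in> Delta_set \<Longrightarrow>
   vA ((\<lambda>a. t *\<^sub>R a + b *\<^sub>R one) ` A) s = t * vA A s + b"
proof -
  assume f: "finite A" "A \<noteq> {}" and t: "0 \<le> t" and s: "s \<in> Delta_set"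
  have "vA ((\<lambda>a. t *\<^sub>R a + b *\<^sub>R one) ` A) s = Max ((\<lambda>x. t * x + b) ` ((\<lambda>a. lin a s) ` A))"
    by (simp add: vA_lin image_image lin_scale lin_shift[OF s])
  also have "\<dots> = t * Max ((\<lambda>a. lin a s) ` A) + b"
    using f t by (intro mono_Max_commute[symmetric]) (auto simp: mono_def mult_left_mono)
  finally show ?thesis by (simp add: vA_lin)
qed



lemma pop_space: "population S M \<Longrightarrow> space M = S"
  unfolding population_def using sets_eq_imp_space_eq[of M "restrict_space borel S"]
  by (simp add: space_restrict_space)

lemma pop_prob: "population S M \<Longrightarrow> prob_space M"
  unfolding population_def by simp

lemma pop_meas: "population S M \<Longrightarrow> continuous_on S h \<Longrightarrow> h \<in> borel_measurable M"
  unfolding population_def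
  by (metis borel_measurable_continuous_on_restrict measurable_cong_sets)

lemma pop_integrable:
  fixes h :: "real^'a::finite \<Rightarrow> real"
  assumes "population S M" "S \<subseteq> Delta_set" "continuous_on Delta_set h"
  shows "integrable M h"
proof -
  interpret prob_space M using pop_prob[OF assms(1)] .
  have "compact (h ` Delta_set)" using compact_continuous_image[OF assms(3) Delta_compact] .
  then obtain B where B: "\<forall>x\<in>h ` Delta_set. norm x \<le> B"
    using compact_imp_bounded bounded_iff by metis
  have "AE x in M. norm (h x) \<le> B"
    using B assms(2) pop_space[OF assms(1)] by (intro AE_I2) auto
  moreover have "h \<in> borel_measurable M"
    using pop_meas[OF assms(1)] continuous_on_subset[OF assms(3) assms(2)] by blast
  ultimately show ?thesis using integrable_const_bound[of h B] by blast
qed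

definition II :: "(real^'a::finite) measure \<Rightarrow> (real^'a) set \<Rightarrow> real" where
  "II M A = (\<integral>s. max (vA A s) 0 \<partial>M)"

lemma II_nonneg: "0 \<le> II M A"
  unfolding II_def by (intro integral_nonneg_AE) auto

lemma II_scale:
  assumes "finite A" "A \<noteq> {}" "0 < t"
  shows "II M ((\<lambda>a. t *\<^sub>R a) ` A) = t * II M A"
proof -
  have "II M ((\<lambda>a. t *\<^sub>R a) ` A) = (\<integral>s. t * max (vA A s) 0 \<partial>M)"
    unfolding II_def using assms by (intro Bochner_Integration.integral_cong) (auto simp: vA_scale max_mult_distrib_left)
  also have "\<dots> = t * II M A" unfolding II_def by simp
  finally show ?thesis .
qed

definition Pex :: "real \<Rightarrow> (real^'a::finite) measure \<Rightarrow> (real^'a) measure \<Rightarrow> bool" where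
  "Pex c M N \<longleftrightarrow> (\<exists>A \<alpha>. firm A \<alpha> \<and> excludes c A \<alpha> M \<and> \<not> excludes c A \<alpha> N)"

lemma Pex_iff:
  assumes "0 < c"
  shows "Pex c M N \<longleftrightarrow> (\<exists>A. finite A \<and> A \<noteq> {} \<and> II M A < II N A)"
proof
  assume "Pex c M N"
  then obtain A \<alpha> where "firm A \<alpha>" "excludes c A \<alpha> M" "\<not> excludes c A \<alpha> N"
    unfolding Pex_def by blast
  hence f: "finite A" "A \<noteq> {}" "0 < \<alpha>" and e: "\<alpha> * II M A \<le> c" "\<not> \<alpha> * II N A \<le> c"
    unfolding firm_def excludes_def II_def[symmetric] by auto
  from e have "\<alpha> * II M A < \<alpha> * II N A" by linarith
  hence "II M A < II N A" using f(3) by (simp add: mult_less_cancel_left_pos)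
  with f have "finite A" "A \<noteq> {}" "II M A < II N A" by auto
  thus "\<exists>A. finite A \<and> A \<noteq> {} \<and> II M A < II N A" by auto
next
  assume "\<exists>A. finite A \<and> A \<noteq> {} \<and> II M A < II N A"
  then obtain A where A: "finite A" "A \<noteq> {}" "II M A < II N A" by blast
  define t where "t = 2 * c / (II M A + II N A)"
  have pos: "0 < II M A + II N A" using A(3) II_nonneg[of M A] by linarith
  hence t: "0 < t" unfolding t_def using assms by simp
  have "t * II M A < c" "c < t * II N A"
    unfolding t_def using pos A(3) assms by (simp_all add: field_simps)
  hence "firm ((\<lambda>a. t *\<^sub>R a) ` A) 1" "excludes c ((\<lambda>a. t *\<^sub>R a) ` A) 1 M"
    "\<not> excludes c ((\<lambda>a. t *\<^sub>R a) ` A) 1 N"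
    using A t II_scale[OF A(1,2) t]
    unfolding firm_def excludes_def II_def[symmetric] by auto
  thus "Pex c M N" unfolding Pex_def by blast
qed



lemma minorant:
  fixes h :: "real^'a::finite \<Rightarrow> real"
  assumes cv: "convex_on Delta_set h" and ct: "continuous_on Delta_set h"
    and x0: "x0 \<in> Delta_set" and e: "0 < e"
  shows "\<exists>a b. (\<forall>x\<in>Delta_set. lin a x + b \<le> h x) \<and> h x0 - e < lin a x0 + b"
proof -
  define E where "E = {p :: (real^'a) \<times> real. fst p \<in> Delta_set \<and> h (fst p) \<le> snd p}"
  have "convex E"
    unfolding convex_def
  proof (intro ballI allI impI)
    fix p q :: "(real^'a) \<times> real" and u v :: real
    assume p: "p \<in> E" and q: "q \<in> E" and uv: "0 \<le> u" "0 \<le> v" "u + v = 1"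
    have d: "u *\<^sub>R fst p + v *\<^sub>R fst q \<in> Delta_set"
      using p q uv Delta_convex unfolding E_def convex_def by auto
    have "h (u *\<^sub>R fst p + v *\<^sub>R fst q) \<le> u * h (fst p) + v * h (fst q)"
      using cv p q uv unfolding convex_on_def E_def by auto
    also have "\<dots> \<le> u * snd p + v * snd q"
      using p q uv unfolding E_def by (intro add_mono mult_left_mono) auto
    finally show "u *\<^sub>R p + v *\<^sub>R q \<in> E" using d unfolding E_def by simp
  qed
  have "closed E"
  proof -
    have "E = (Delta_set \<times> UNIV) \<inter> (\<lambda>p. h (fst p) - snd p) -` {..0}"
      unfolding E_def by auto
    also have "closed \<dots>"
    proof (rule continuous_closed_preimage)
      show "continuous_on (Delta_set \<times> UNIV) (\<lambda>p. h (fst p) - snd p)"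
        by (intro continuous_intros continuous_on_compose2[OF ct]) auto
    qed (auto intro: closed_Times Delta_closed)
    finally show ?thesis .
  qed
  have "(x0, h x0 - e/2) \<notin> E" unfolding E_def using e by auto
  from separating_hyperplane_closed_point[OF \<open>convex E\<close> \<open>closed E\<close> this]
  obtain a' b' where ab: "inner a' (x0, h x0 - e/2) < b'" "\<forall>p\<in>E. b' < inner a' p" by blast
  obtain a1 \<beta> where a': "a' = (a1, \<beta>)" by (cases a')
  have in0: "(x0, h x0) \<in> E" unfolding E_def using x0 by auto
  have l1: "inner a1 x0 + \<beta> * (h x0 - e/2) < b'" using ab(1) a' by (simp add: inner_Pair)
  have l2: "b' < inner a1 x0 + \<beta> * h x0" using ab(2) in0 a' by (auto simp: inner_Pair)
  have "\<beta> * (e/2) > 0" using l1 l2 by (simp add: algebra_simps)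
  hence bpos: "\<beta> > 0" using e by (simp add: zero_less_mult_iff)
  define a where "a = (- 1 / \<beta>) *\<^sub>R a1"
  define b where "b = b' / \<beta>"
  have la: "lin a x + b = (b' - inner a1 x) / \<beta>" for x
    unfolding a_def b_def lin_inner using bpos by (simp add: field_simps)
  have "\<forall>x\<in>Delta_set. lin a x + b \<le> h x"
  proof
    fix x :: "real^'a" assume x: "x \<in> Delta_set"
    hence "(x, h x) \<in> E" unfolding E_def by auto
    hence "b' < inner a1 x + \<beta> * h x" using ab(2) a' by (auto simp: inner_Pair)
    thus "lin a x + b \<le> h x" unfolding la using bpos by (simp add: field_simps)
  qed
  moreover have "h x0 - e < lin a x0 + b"
  proof -
    have "h x0 - e/2 < (b' - inner a1 x0) / \<beta>" using l1 bpos by (simp add: field_simps)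
    thus ?thesis unfolding la using e by linarith
  qed
  ultimately show ?thesis by blast
qed



lemma approx:
  fixes h :: "real^'a::finite \<Rightarrow> real"
  assumes cv: "convex_on Delta_set h" and ct: "continuous_on Delta_set h" and e: "0 < e"
  shows "\<exists>A K. finite A \<and> A \<noteq> {} \<and>
     (\<forall>x\<in>Delta_set. h x - e \<le> max (vA A x) 0 - K \<and> max (vA A x) 0 - K \<le> h x)"
proof -
  have "\<forall>x0\<in>Delta_set. \<exists>ab. (\<forall>x\<in>Delta_set. lin (fst ab) x + snd ab \<le> h x) \<and> h x0 - e/2 < lin (fst ab) x0 + snd ab"
    using minorant[OF cv ct _, of _ "e/2"] e by fastforce
  then obtain ab where ab: "\<And>x0. x0 \<in> Delta_set \<Longrightarrow> (\<forall>x\<in>Delta_set. lin (fst (ab x0)) x + snd (ab x0) \<le> h x) \<and> h x0 - e/2 < lin (fst (ab x0)) x0 + snd (ab x0)"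
    by metis
  define LL where "LL x0 x = lin (fst (ab x0)) x + snd (ab x0)" for x0 x
  have lle: "\<And>x0 x. x0 \<in> Delta_set \<Longrightarrow> x \<in> Delta_set \<Longrightarrow> LL x0 x \<le> h x"
    using ab unfolding LL_def by blast
  have lx0: "\<And>x0. x0 \<in> Delta_set \<Longrightarrow> h x0 - e/2 < LL x0 x0"
    using ab unfolding LL_def by blast
  have "\<forall>x0\<in>Delta_set. \<exists>d>0. \<forall>x\<in>Delta_set. dist x x0 < d \<longrightarrow> h x - e < LL x0 x"
  proof
    fix x0 :: "real^'a" assume x0: "x0 \<in> Delta_set"
    have "continuous_on Delta_set (\<lambda>x. h x - LL x0 x)"
      unfolding LL_def lin_def by (intro continuous_intros ct)
    then obtain d where d: "d > 0" "\<forall>x\<in>Delta_set. dist x x0 < d \<longrightarrow> dist (h x - LL x0 x) (h x0 - LL x0 x0) < e/2"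
      using x0 e unfolding continuous_on_iff by (metis half_gt_zero)
    have "\<forall>x\<in>Delta_set. dist x x0 < d \<longrightarrow> h x - e < LL x0 x"
    proof (intro ballI impI)
      fix x assume "x \<in> Delta_set" "dist x x0 < d"
      hence "dist (h x - LL x0 x) (h x0 - LL x0 x0) < e/2" using d by blast
      thus "h x - e < LL x0 x" using lx0[OF x0] unfolding dist_real_def by linarith
    qed
    thus "\<exists>d>0. \<forall>x\<in>Delta_set. dist x x0 < d \<longrightarrow> h x - e < LL x0 x" using d by blast
  qed
  then obtain d where d: "\<And>x0. x0 \<in> Delta_set \<Longrightarrow> d x0 > 0 \<and> (\<forall>x\<in>Delta_set. dist x x0 < d x0 \<longrightarrow> h x - e < LL x0 x)"
    by metis
  have cover: "Delta_set \<subseteq> (\<Union>x0\<in>Delta_set. ball x0 (d x0))"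
    using d by (auto intro!: bexI[where x=x for x] simp: )
  obtain C where C: "C \<subseteq> Delta_set" "finite C" "Delta_set \<subseteq> (\<Union>x0\<in>C. ball x0 (d x0))"
    using compactE_image[OF Delta_compact _ cover] by blast
  have Cne: "C \<noteq> {}" using C(3) Delta_ne by blast
  define G where "G x = Max ((\<lambda>x0. LL x0 x) ` C)" for x
  have Gle: "G x \<le> h x" if "x \<in> Delta_set" for x
    unfolding G_def using C Cne lle that by (subst Max_le_iff) auto
  have Gge: "h x - e < G x" if x: "x \<in> Delta_set" for x
  proof -
    obtain x0 where x0: "x0 \<in> C" "x \<in> ball x0 (d x0)" using C(3) x by blast
    have "h x - e < LL x0 x" using d[of x0] x0 C(1) x by (auto simp: dist_commute)
    also have "\<dots> \<le> G x" unfolding G_def using C(2) x0(1) by (intro Max_ge) auto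
    finally show ?thesis .
  qed
  have "compact (h ` Delta_set)" using compact_continuous_image[OF ct Delta_compact] .
  then obtain B where B: "\<forall>y\<in>h ` Delta_set. norm y \<le> B"
    using compact_imp_bounded bounded_iff by metis
  define K where "K = e + B"
  define A0 where "A0 = (\<lambda>x0. fst (ab x0) + snd (ab x0) *\<^sub>R one) ` C"
  define A where "A = (\<lambda>a. 1 *\<^sub>R a + K *\<^sub>R one) ` A0"
  have A0: "finite A0" "A0 \<noteq> {}" using C Cne unfolding A0_def by auto
  have vA0: "vA A0 x = G x" if "x \<in> Delta_set" for x
    unfolding A0_def vA_lin G_def image_image LL_def lin_shift[OF that] ..
  have vAA: "vA A x = G x + K" if "x \<in> Delta_set" for x
    unfolding A_def using vA_affine[OF A0 _ that, of 1 K] vA0[OF that] by simp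
  have "A \<noteq> {}" "finite A" using A0 unfolding A_def by auto
  moreover have "\<forall>x\<in>Delta_set. h x - e \<le> max (vA A x) 0 - K \<and> max (vA A x) 0 - K \<le> h x"
  proof
    fix x :: "real^'a" assume x: "x \<in> Delta_set"
    have "- B \<le> h x" using B x by (auto simp: abs_le_iff)
    hence "0 \<le> vA A x" using Gge[OF x] vAA[OF x] unfolding K_def by linarith
    hence "max (vA A x) 0 - K = G x" using vAA[OF x] by simp
    thus "h x - e \<le> max (vA A x) 0 - K \<and> max (vA A x) 0 - K \<le> h x"
      using Gge[OF x] Gle[OF x] by simp
  qed
  ultimately show ?thesis by blast
qed



lemma int_add_const:
  fixes f :: "'b \<Rightarrow> real"
  shows "prob_space M \<Longrightarrow> integrable M f \<Longrightarrow> (\<integral>x. f x + c \<partial>M) = (\<integral>x. f x \<partial>M) + c"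
proof -
  assume P: "prob_space M" and f: "integrable M f"
  interpret prob_space M by (rule P)
  show ?thesis using f by (subst Bochner_Integration.integral_add) (auto simp: prob_space)
qed

lemma vA0_fun: "finite A \<Longrightarrow> A \<noteq> {} \<Longrightarrow> (\<lambda>s. max (vA A s) 0) = vA (insert 0 A)"
  using vA_insert0 by blast

lemma II_int: "population S M \<Longrightarrow> S \<subseteq> Delta_set \<Longrightarrow> finite A \<Longrightarrow> A \<noteq> {} \<Longrightarrow>
   integrable M (\<lambda>s. max (vA A s) 0)"
  by (subst vA0_fun) (auto intro!: pop_integrable vA_cont)

lemma Morder_iff:
  assumes M: "population S M" and N: "population S N" and S: "S \<subseteq> Delta_set"
  shows "M_order N M \<longleftrightarrow> (\<forall>A. finite A \<and> A \<noteq> {} \<longrightarrow> II M A \<le> II N A)"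
proof
  assume mo: "M_order N M"
  show "\<forall>A. finite A \<and> A \<noteq> {} \<longrightarrow> II M A \<le> II N A"
  proof (intro allI impI)
    fix A :: "(real^'a) set" assume A: "finite A \<and> A \<noteq> {}"
    have "convex_on Delta_set (vA (insert 0 A))" using A Delta_convex
      by (subst vA_convex) auto
    moreover have "continuous_on Delta_set (vA (insert 0 A))" using A by (intro vA_cont) auto
    ultimately have "(\<integral>s. vA (insert 0 A) s \<partial>M) \<le> (\<integral>s. vA (insert 0 A) s \<partial>N)"
      using mo unfolding M_order_def by blast
    thus "II M A \<le> II N A" unfolding II_def vA0_fun[OF conjunct1[OF A] conjunct2[OF A]] .
  qed
next
  assume H: "\<forall>A. finite A \<and> A \<noteq> {} \<longrightarrow> II M A \<le> II N A"
  show "M_order N M" unfolding M_order_def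
  proof (intro allI impI)
    fix h :: "real^'a \<Rightarrow> real"
    assume hh: "convex_on Delta_set h \<and> continuous_on Delta_set h"
    have hc: "continuous_on Delta_set h" and hcv: "convex_on Delta_set h" using hh by blast+
    have intM: "integrable M h" and intN: "integrable N h"
      using pop_integrable[OF M S hc] pop_integrable[OF N S hc] .
    have "(\<integral>s. h s \<partial>M) \<le> (\<integral>s. h s \<partial>N) + e" if e: "0 < e" for e
    proof -
      obtain A K where A: "finite A" "A \<noteq> {}"
        and AK: "\<forall>x\<in>Delta_set. h x - e \<le> max (vA A x) 0 - K \<and> max (vA A x) 0 - K \<le> h x"
        using approx[OF hcv hc e] by blast
      have iM: "integrable M (\<lambda>s. max (vA A s) 0)" and iN: "integrable N (\<lambda>s. max (vA A s) 0)"
        using II_int[OF M S A] II_int[OF N S A] .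
      interpret PM: prob_space M using pop_prob[OF M] .
      interpret PN: prob_space N using pop_prob[OF N] .
      have p1: "h x \<le> max (vA A x) 0 + (e - K)" if "x \<in> space M" for x
      proof -
        have "x \<in> Delta_set" using that S pop_space[OF M] by blast
        from bspec[OF AK this] show ?thesis by linarith
      qed
      have p2: "max (vA A x) 0 + (- K) \<le> h x" if "x \<in> space N" for x
      proof -
        have "x \<in> Delta_set" using that S pop_space[OF N] by blast
        from bspec[OF AK this] show ?thesis by linarith
      qed
      have "(\<integral>s. h s \<partial>M) \<le> (\<integral>s. max (vA A s) 0 + (e - K) \<partial>M)"
        by (rule integral_mono[OF intM Bochner_Integration.integrable_add[OF iM PM.integrable_const] p1])
      also have "\<dots> = II M A + (e - K)" unfolding II_def
        using int_add_const[OF pop_prob[OF M] iM] .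
      also have "\<dots> \<le> II N A + (e - K)" using H A by auto
      also have "\<dots> = (\<integral>s. max (vA A s) 0 + (- K) \<partial>N) + e" unfolding II_def
        using int_add_const[OF pop_prob[OF N] iN, of "-K"] by simp
      also have "(\<integral>s. max (vA A s) 0 + (- K) \<partial>N) \<le> (\<integral>s. h s \<partial>N)"
        by (rule integral_mono[OF Bochner_Integration.integrable_add[OF iN PN.integrable_const] intN p2])
      hence "(\<integral>s. max (vA A s) 0 + (- K) \<partial>N) + e \<le> (\<integral>s. h s \<partial>N) + e" by simp
      finally show ?thesis .
    qed
    thus "(\<integral>s. h s \<partial>M) \<le> (\<integral>s. h s \<partial>N)" by (rule field_le_epsilon)
  qed
qed



lemma lin_axis: "lin (axis i 1) s = s $ i"
  by (simp add: lin_inner inner_axis')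

definition Ax :: "real^'a::finite \<Rightarrow> (real^'a) set" where
  "Ax x = range (\<lambda>i. axis i 1 + (- x $ i) *\<^sub>R one)"

lemma Ax_fin: "finite (Ax x)" "Ax x \<noteq> {}"
  by (auto simp: Ax_def)

lemma vA_Ax: "s \<in> Delta_set \<Longrightarrow> vA (Ax x) s = Max (range (\<lambda>i. s $ i - x $ i))"
  unfolding vA_lin Ax_def image_image lin_shift lin_axis by simp

lemma vA_Ax_le: "s \<in> Delta_set \<Longrightarrow> vA (Ax x) s \<le> 0 \<longleftrightarrow> s \<le> x"
  by (simp add: vA_Ax less_eq_vec_def)

lemma sets_borel_atMost: "sets (borel :: (real^'a::finite) measure) = sigma_sets UNIV (range (\<lambda>a. {..a}))"
  by (subst borel_eq_atMost) (simp add: sets_measure_of)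

lemma pop_sets:
  assumes M: "population S M" and S: "S \<in> sets borel"
  shows "sets M = sigma_sets S ((\<lambda>x. S \<inter> {..x}) ` UNIV)"
proof -
  have "sets M = (\<inter>) S ` sets borel" using M by (simp add: population_def sets_restrict_space)
  also have "\<dots> = (\<inter>) S ` sigma_sets UNIV (range (\<lambda>a. {..a}))" by (simp add: sets_borel_atMost)
  also have "\<dots> = sigma_sets S ((\<inter>) S ` range (\<lambda>a. {..a}))"
    using S by (intro sigma_sets_Int) (auto simp: sets_borel_atMost)
  finally show ?thesis by (simp add: image_image)
qed

definition gg :: "real^'a::finite \<Rightarrow> nat \<Rightarrow> real^'a \<Rightarrow> real" where
  "gg x n s = 1 - real n * max (vA (Ax x) s) 0 + max (real n * max (vA (Ax x) s) 0 - 1) 0"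

lemma gg_cont: "continuous_on T (gg x n)"
  unfolding gg_def using Ax_fin[of x]
  by (intro continuous_intros continuous_on_max vA_cont) auto

lemma gg_bound: "\<bar>gg x n s\<bar> \<le> 1"
proof -
  have "0 \<le> real n * max (vA (Ax x) s) 0" by simp
  thus ?thesis unfolding gg_def by (simp add: abs_le_iff max_def)
qed

lemma gg_lim:
  assumes "s \<in> Delta_set"
  shows "(\<lambda>n. gg x n s) \<longlonglongrightarrow> indicator {..x} s"
proof (cases "s \<le> x")
  case True
  hence "vA (Ax x) s \<le> 0" using vA_Ax_le[OF assms] by simp
  hence "gg x n s = 1" for n unfolding gg_def by (simp add: max_def)
  thus ?thesis using True by simp
next
  case False
  hence pos: "0 < vA (Ax x) s" using vA_Ax_le[OF assms, of x] by linarith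
  obtain N :: nat where N: "1 / vA (Ax x) s < real N" using reals_Archimedean2 by blast
  have "gg x n s = 0" if "N \<le> n" for n
  proof -
    have "1 < real N * vA (Ax x) s" using N pos by (simp add: field_simps)
    also have "\<dots> \<le> real n * vA (Ax x) s" using that pos by (intro mult_right_mono) auto
    finally show ?thesis unfolding gg_def using pos by (simp add: max_def)
  qed
  hence "eventually (\<lambda>n. gg x n s = 0) sequentially" by (auto simp: eventually_sequentially)
  hence "(\<lambda>n. gg x n s) \<longlonglongrightarrow> 0" by (rule tendsto_eventually)
  thus ?thesis using False by simp
qed

lemma gg_repr:
  assumes s: "s \<in> Delta_set"
  shows "gg x n s = 1 - max (vA ((\<lambda>a. real n *\<^sub>R a) ` Ax x) s) 0
                   + max (vA ((\<lambda>a. real n *\<^sub>R a + (-1) *\<^sub>R one) ` Ax x) s) 0"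
proof -
  have e1: "vA ((\<lambda>a. real n *\<^sub>R a) ` Ax x) s = real n * vA (Ax x) s"
    using Ax_fin by (intro vA_scale) auto
  have e2: "vA ((\<lambda>a. real n *\<^sub>R a + (-1) *\<^sub>R one) ` Ax x) s = real n * vA (Ax x) s - 1"
    using vA_affine[OF Ax_fin _ s, of "real n" "-1"] by simp
  have "max (real n * vA (Ax x) s) 0 = real n * max (vA (Ax x) s) 0"
    by (simp add: max_mult_distrib_left)
  moreover have "max (real n * max (vA (Ax x) s) 0 - 1) 0 = max (real n * vA (Ax x) s - 1) 0"
  proof (cases "vA (Ax x) s \<ge> 0")
    case False
    hence "real n * vA (Ax x) s \<le> 0" by (intro mult_nonneg_nonpos) auto
    thus ?thesis using False by (simp add: max_def)
  qed simp
  ultimately show ?thesis unfolding gg_def e1 e2 by simp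
qed

lemma int_gg:
  assumes M: "population S M" and S: "S \<subseteq> Delta_set"
  shows "(\<integral>s. gg x n s \<partial>M) = 1 - II M ((\<lambda>a. real n *\<^sub>R a) ` Ax x)
                   + II M ((\<lambda>a. real n *\<^sub>R a + (-1) *\<^sub>R one) ` Ax x)"
proof -
  interpret prob_space M using pop_prob[OF M] .
  let ?A1 = "(\<lambda>a. real n *\<^sub>R a) ` Ax x" and ?A2 = "(\<lambda>a. real n *\<^sub>R a + (-1) *\<^sub>R one) ` Ax x"
  have f: "finite ?A1" "?A1 \<noteq> {}" "finite ?A2" "?A2 \<noteq> {}" using Ax_fin[of x] by auto
  have i1: "integrable M (\<lambda>s. max (vA ?A1 s) 0)" and i2: "integrable M (\<lambda>s. max (vA ?A2 s) 0)"
    using II_int[OF M S f(1,2)] II_int[OF M S f(3,4)] .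
  have "(\<integral>s. gg x n s \<partial>M) = (\<integral>s. 1 - max (vA ?A1 s) 0 + max (vA ?A2 s) 0 \<partial>M)"
    using pop_space[OF M] S gg_repr by (intro Bochner_Integration.integral_cong) auto
  also have "\<dots> = (\<integral>s. 1 - max (vA ?A1 s) 0 \<partial>M) + (\<integral>s. max (vA ?A2 s) 0 \<partial>M)"
    using i1 i2 by (intro Bochner_Integration.integral_add) auto
  also have "(\<integral>s. 1 - max (vA ?A1 s) 0 \<partial>M) = (\<integral>s. 1 \<partial>M) - (\<integral>s. max (vA ?A1 s) 0 \<partial>M)"
    using i1 by (intro Bochner_Integration.integral_diff) auto
  finally show ?thesis unfolding II_def by (simp add: prob_space)
qed

lemma unique:
  assumes M: "population S M" and N: "population S N" and Sb: "S \<in> sets borel" and S: "S \<subseteq> Delta_set"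
    and H: "\<forall>A. finite A \<and> A \<noteq> {} \<longrightarrow> II M A = II N A"
  shows "M = N"
proof -
  interpret PM: prob_space M using pop_prob[OF M] .
  interpret PN: prob_space N using pop_prob[OF N] .
  let ?E = "(\<lambda>x. S \<inter> {..x}) ` (UNIV :: (real^'a) set)"
  have meas_eq: "measure M (S \<inter> {..x}) = measure N (S \<inter> {..x})" for x :: "real^'a"
  proof -
    have gint: "(\<integral>s. gg x n s \<partial>M) = (\<integral>s. gg x n s \<partial>N)" for n
      unfolding int_gg[OF M S] int_gg[OF N S] using H Ax_fin[of x] by auto
    have lim: "(\<lambda>n. (\<integral>s. gg x n s \<partial>P)) \<longlonglongrightarrow> measure P (S \<inter> {..x})"
      if P: "population S P" for P
    proof -
      interpret PP: prob_space P using pop_prob[OF P] .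
      have X: "S \<inter> {..x} \<in> sets P"
        using P unfolding population_def by (auto simp: sets_restrict_space)
      have "(\<lambda>n. (\<integral>s. gg x n s \<partial>P)) \<longlonglongrightarrow> (\<integral>s. indicator (S \<inter> {..x}) s \<partial>P)"
      proof (rule integral_dominated_convergence[where w = "\<lambda>_. 1"])
        show "indicator (S \<inter> {..x}) \<in> borel_measurable P" using X by simp
        show "gg x n \<in> borel_measurable P" for n using pop_meas[OF P gg_cont] .
        show "integrable P (\<lambda>_. 1::real)" by simp
        show "AE s in P. (\<lambda>n. gg x n s) \<longlonglongrightarrow> (indicator (S \<inter> {..x}) s :: real)"
        proof (rule AE_I2)
          fix s assume "s \<in> space P"
          hence s: "s \<in> S" "s \<in> Delta_set" using pop_space[OF P] S by auto
          show "(\<lambda>n. gg x n s) \<longlonglongrightarrow> indicator (S \<inter> {..x}) s"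
            using gg_lim[OF s(2), of x] s(1) by (simp add: indicator_def)
        qed
        show "AE s in P. norm (gg x n s) \<le> 1" for n by (intro AE_I2) (simp add: gg_bound)
      qed
      also have "(\<integral>s. indicator (S \<inter> {..x}) s \<partial>P) = measure P (S \<inter> {..x})"
        using X by simp
      finally show ?thesis .
    qed
    show ?thesis using LIMSEQ_unique[OF lim[OF M]] lim[OF N] gint by simp
  qed
  show ?thesis
  proof (rule measure_eqI_generator_eq[where E = ?E and \<Omega> = S and A = "\<lambda>_. S"])
    show "Int_stable ?E"
    proof (rule Int_stableI)
      fix a b assume "a \<in> ?E" "b \<in> ?E"
      then obtain x y where "a = S \<inter> {..x}" "b = S \<inter> {..y}" by blast
      hence "a \<inter> b = S \<inter> {..inf x y}" by auto
      thus "a \<inter> b \<in> ?E" by blast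
    qed
    show "?E \<subseteq> Pow S" by auto
    show "emeasure M X = emeasure N X" if "X \<in> ?E" for X
      using that meas_eq by (auto simp: PM.emeasure_eq_measure PN.emeasure_eq_measure)
    show "sets M = sigma_sets S ?E" by (rule pop_sets[OF M Sb])
    show "sets N = sigma_sets S ?E" by (rule pop_sets[OF N Sb])
    have "S = S \<inter> {..one}" using S by (auto simp: less_eq_vec_def one_def) (meson Delta_comp subsetD)
    thus "range (\<lambda>_. S) \<subseteq> ?E" by blast
    show "(\<Union>i::nat. S) = S" by simp
    show "emeasure M S \<noteq> \<infinity>" for i::nat by simp
  qed
qed



theorem proposition1:
  fixes S :: "(real^'a::finite) set" and c :: real
    and \<pi> \<pi>' :: "(real^'a) measure"
  assumes "S \<in> sets borel" and "S \<subseteq> Delta_set" and "0 < c"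
    and "population S \<pi>" and "population S \<pi>'"
    and "skill \<pi> = skill \<pi>'"
  shows "(sys_disc c \<pi> \<pi>' \<longleftrightarrow> M_order \<pi>' \<pi> \<and> \<pi> \<noteq> \<pi>')
       \<and> (unsys_disc c \<pi> \<pi>' \<longleftrightarrow> \<not> M_order \<pi> \<pi>' \<and> \<not> M_order \<pi>' \<pi>)
       \<and> (no_disc c \<pi> \<pi>' \<longleftrightarrow> \<pi> = \<pi>')"
proof -
  define P where "P = Pex c \<pi> \<pi>'"
  define Q where "Q = Pex c \<pi>' \<pi>"
  have s1: "sys_disc c \<pi> \<pi>' \<longleftrightarrow> \<not> Q \<and> P"
    unfolding sys_disc_def P_def Q_def Pex_def by blast
  have s2: "sys_disc c \<pi>' \<pi> \<longleftrightarrow> \<not> P \<and> Q"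
    unfolding sys_disc_def P_def Q_def Pex_def by blast
  have u: "unsys_disc c \<pi> \<pi>' \<longleftrightarrow> P \<and> Q"
    unfolding unsys_disc_def P_def Q_def Pex_def by blast
  have Pi: "P \<longleftrightarrow> (\<exists>A. finite A \<and> A \<noteq> {} \<and> II \<pi> A < II \<pi>' A)"
    unfolding P_def using Pex_iff[OF assms(3)] .
  have Qi: "Q \<longleftrightarrow> (\<exists>A. finite A \<and> A \<noteq> {} \<and> II \<pi>' A < II \<pi> A)"
    unfolding Q_def using Pex_iff[OF assms(3)] .
  have m1: "M_order \<pi>' \<pi> \<longleftrightarrow> \<not> Q"
    unfolding Morder_iff[OF assms(4) assms(5) assms(2)] Qi by (auto simp: not_less)
  have m2: "M_order \<pi> \<pi>' \<longleftrightarrow> \<not> P"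
    unfolding Morder_iff[OF assms(5) assms(4) assms(2)] Pi by (auto simp: not_less)
  have eq: "\<pi> = \<pi>' \<longleftrightarrow> \<not> P \<and> \<not> Q"
  proof
    assume "\<pi> = \<pi>'" thus "\<not> P \<and> \<not> Q" unfolding Pi Qi by auto
  next
    assume "\<not> P \<and> \<not> Q"
    hence "\<forall>A. finite A \<and> A \<noteq> {} \<longrightarrow> II \<pi> A = II \<pi>' A" unfolding Pi Qi
      by (metis linorder_neqE_linordered_idom)
    thus "\<pi> = \<pi>'" using unique[OF assms(4) assms(5) assms(1) assms(2)] by blast
  qed
  show ?thesis unfolding no_disc_def s1 s2 u m1 m2 eq by blast
qed

end
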